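(* Let $n$ be a positive integer divisible by $4$. Let $\mathcal{T}^*_n$ be the family of triangles on an $n$-element vertex set obtained as follows: choose $\frac{n}{4}$ pairwise disjoint pairs $\{u_i,w_i\}$ of vertices, let $R$ be the set of the remaining $\frac{n}{2}$ vertices, and let $\mathcal{T}^*_n=\{\{u_i,w_i,r\} : 1\le i\le \frac n4,\ r\in R\}$. Then $\mathcal{T}^*_n$ is a set of $\frac{n^2}{8}$ triangles with no rainbow triangle, and it is the unique such set up to isomorphism: every set of exactly $\frac{n^2}{8}$ distinct triangles on an $n$-element vertex set having no rainbow triangle is isomorphic to $\mathcal{T}^*_n$ (i.e., is the image of $\mathcal{T}^*_n$ under a bijection of the vertex sets).
   Context: A triangle on a vertex set $V$ is a $3$-element subset $\{x,y,z\}\subseteq V$, identified with its edge set $\{\{x,y\},\{y,z\},\{x,z\}\}$. For a family $\mathcal{T}$ of triangles, a rainbow triangle is a triangle $\{x,y,z\}$ on $V$ together with three distinct members $t_1,t_2,t_3$ of $\mathcal{T}$ such that $\{x,y\}$ is an edge of $t_1$, $\{y,z\}$ is an edge of $t_2$ and $\{x,z\}$ is an edge of $t_3$. *)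

theory Defs
  imports Main
begin

definition triangles_on :: "'a set \<Rightarrow> 'a set set" where
  "triangles_on V = {t. t \<subseteq> V \<and> card t = 3}"

text \<open>A rainbow triangle for a family T of triangles on V: a triangle {x,y,z} on V
  and three distinct members t1,t2,t3 of T with {x,y} an edge of t1, {y,z} an edge
  of t2, {x,z} an edge of t3 (x,y,z are distinct since card {x,y,z} = 3, so an edge
  {x,y} of t is just {x,y} being a subset of t).\<close>
definition has_rainbow_triangle :: "'a set \<Rightarrow> 'a set set \<Rightarrow> bool" where
  "has_rainbow_triangle V T \<longleftrightarrow>
     (\<exists>x y z t1 t2 t3. {x, y, z} \<in> triangles_on V \<and>
        t1 \<in> T \<and> t2 \<in> T \<and> t3 \<in> T \<and> t1 \<noteq> t2 \<and> t2 \<noteq> t3 \<and> t1 \<noteq> t3 \<and>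
        {x, y} \<subseteq> t1 \<and> {y, z} \<subseteq> t2 \<and> {x, z} \<subseteq> t3)"

definition admissible_pairs :: "nat \<Rightarrow> 'a set \<Rightarrow> 'a set set \<Rightarrow> bool" where
  "admissible_pairs n V P \<longleftrightarrow>
     (\<forall>p\<in>P. p \<subseteq> V \<and> card p = 2) \<and> finite P \<and> card P = n div 4 \<and> pairwise disjnt P"

definition Tstar_choice :: "'a set \<Rightarrow> 'a set set \<Rightarrow> 'a set set" where
  "Tstar_choice V P = {insert r p | p r. p \<in> P \<and> r \<in> V - \<Union>P}"

definition Tstar :: "nat \<Rightarrow> nat set set" where
  "Tstar n = {{2*i, 2*i+1, r} | i r. i < n div 4 \<and> n div 2 \<le> r \<and> r < n}"

end

theory Submission
  imports Defs
begin

lemma c3d: "card {x,y,z} = 3 \<Longrightarrow> x \<noteq> y \<and> y \<noteq> z \<and> x \<noteq> z"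
  by (cases "x = y"; cases "y = z"; cases "x = z"; simp add: card_insert_if)


lemma four_ab: "4*a*b \<le> ((a::nat)+b)^2"
proof -
  have "4*int a*int b \<le> (int a+int b)^2"
    using zero_le_power2[of "int a - int b"] by (simp add: power2_eq_square algebra_simps)
  then show ?thesis by (metis of_nat_le_iff of_nat_add of_nat_mult of_nat_numeral of_nat_power)
qed

lemma four_ab_eq: "4*a*b = ((a::nat)+b)^2 \<Longrightarrow> a = b"
proof -
  assume "4*a*b = ((a::nat)+b)^2"
  then have "4*int a*int b = (int a+int b)^2"
    by (metis of_nat_add of_nat_mult of_nat_numeral of_nat_power)
  then have "(int a - int b)^2 = 0" by (simp add: power2_eq_square algebra_simps)
  then show "a = b" by simp
qed

lemma mantel:
  fixes V :: "'a set" and L :: "'a set set"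
  assumes fin: "finite V"
    and edges: "\<And>e. e \<in> L \<Longrightarrow> e \<subseteq> V \<and> card e = 2"
    and tf: "\<And>x y z. {x,y} \<in> L \<Longrightarrow> {y,z} \<in> L \<Longrightarrow> {x,z} \<in> L \<Longrightarrow> False"
  shows "4 * card L \<le> (card V)^2 \<and>
    (4 * card L = (card V)^2 \<longrightarrow> (\<exists>A\<subseteq>V. 2 * card A = card V \<and> L = {{a,b} | a b. a \<in> A \<and> b \<in> V - A}))"
proof (cases "V = {}")
  case True
  then have "L = {}" using edges by fastforce
  then show ?thesis using True by auto
next
  case False
  define n where "n = card V"
  define N where "N v = {y. {v,y} \<in> L}" for v
  define D where "D = Sigma V N"
  have finL: "finite L"
    by (rule finite_subset[of L "Pow V"]) (use edges fin in auto)
  have NV: "N v \<subseteq> V" for v using edges unfolding N_def by auto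
  have finN: "finite (N v)" for v using NV fin finite_subset by blast
  have inD: "(x,y) \<in> D \<longleftrightarrow> {x,y} \<in> L" for x y
    using edges unfolding D_def N_def by auto
  have symD: "(x,y) \<in> D \<Longrightarrow> (y,x) \<in> D" for x y
    using inD by (simp add: insert_commute)
  have cardD: "card D = 2 * card L"
  proof -
    define P where "P e = {(x,y). {x,y} = e}" for e :: "'a set"
    have DU: "D = (\<Union>e\<in>L. P e)" unfolding P_def using inD by auto
    have cP: "card (P e) = 2" if "e \<in> L" for e
    proof -
      from edges[OF that] obtain a b where ab: "e = {a,b}" "a \<noteq> b"
        by (meson card_2_iff)
      have "P e = {(a,b),(b,a)}" unfolding P_def ab
        using ab(2) by (auto simp: doubleton_eq_iff)
      then show ?thesis using ab(2) by simp
    qed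
    have fP: "finite (P e)" if "e \<in> L" for e
      by (rule card_ge_0_finite) (simp add: cP[OF that])
    have "card D = (\<Sum>e\<in>L. card (P e))"
      unfolding DU
      by (rule card_UN_disjoint[OF finL]) (use fP in \<open>auto simp: P_def\<close>)
    also have "\<dots> = (\<Sum>e\<in>L. 2)" using cP by simp
    finally show ?thesis by simp
  qed
  obtain x where xV: "x \<in> V" and xmax: "\<And>v. v \<in> V \<Longrightarrow> card (N v) \<le> card (N x)"
  proof -
    let ?S = "(\<lambda>v. card (N v)) ` V"
    have "Max ?S \<in> ?S" using False fin by simp
    then obtain x where "x \<in> V" "card (N x) = Max ?S" by auto
    moreover have "card (N v) \<le> Max ?S" if "v \<in> V" for v using that fin by simp
    ultimately show ?thesis using that by metis
  qed
  define A where "A = N x"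
  define B where "B = V - A"
  define d where "d = card A"
  have AV: "A \<subseteq> V" unfolding A_def using NV .
  have indep: "u \<in> A \<Longrightarrow> w \<in> A \<Longrightarrow> {u,w} \<notin> L" for u w
    unfolding A_def N_def using tf[of x u w] by auto
  define S where "S = Sigma B N"
  have SD: "S \<subseteq> D" unfolding S_def D_def B_def by auto
  have S'D: "prod.swap ` S \<subseteq> D" using SD symD by auto
  have Dcov: "D = S \<union> prod.swap ` S"
  proof
    show "D \<subseteq> S \<union> prod.swap ` S"
    proof
      fix p assume "p \<in> D"
      then obtain u w where p: "p = (u,w)" "u \<in> V" "w \<in> N u" unfolding D_def by auto
      show "p \<in> S \<union> prod.swap ` S"
      proof (cases "u \<in> A")
        case False
        then show ?thesis using p unfolding S_def B_def by auto
      next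
        case True
        have "w \<notin> A" using indep[OF True] p(3) unfolding N_def by auto
        moreover have "w \<in> V" using p NV by auto
        moreover have "(w,u) \<in> D" using symD \<open>p \<in> D\<close> p by auto
        ultimately have "(w,u) \<in> S" unfolding S_def B_def D_def by auto
        then have "prod.swap (w,u) \<in> prod.swap ` S" by (rule imageI)
        then show ?thesis using p by simp
      qed
    qed
  qed (use SD S'D in auto)
  have finB: "finite B" unfolding B_def using fin by auto
  have finD: "finite D" unfolding D_def using fin finN by auto
  have finS: "finite S" using finD SD finite_subset by blast
  have cS: "card S = (\<Sum>v\<in>B. card (N v))" unfolding S_def
    using finB finN by (simp add: card_SigmaI)
  have cSle: "card S \<le> card B * d"
  proof -
    have "(\<Sum>v\<in>B. card (N v)) \<le> (\<Sum>v\<in>B. d)"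
      by (rule sum_mono) (use xmax B_def d_def A_def in auto)
    then show ?thesis using cS by simp
  qed
  have cS': "card (prod.swap ` S) = card S" by (simp add: card_image)
  define DBB where "DBB = S \<inter> prod.swap ` S"
  have key: "card D + card DBB = 2 * card S"
    using card_Un_Int[OF finS finite_imageI[OF finS, of prod.swap]] Dcov cS' DBB_def by simp
  have cB: "card B + d = n" unfolding B_def d_def n_def
    using card_Diff_subset[OF finite_subset[OF AV fin] AV] card_mono[OF fin AV] by simp
  have fourab: "4 * (card B * d) \<le> n^2" using four_ab[of "card B" d] cB by simp
  have bound: "4 * card L \<le> n^2" using key cSle cardD fourab by linarith
  show ?thesis
  proof (intro conjI impI)
    show "4 * card L \<le> (card V)^2" using bound n_def by simp
  next
    assume eq0: "4 * card L = (card V)^2"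
    have eq: "4 * card L = n^2" using eq0 n_def by simp
    have "card DBB = 0" using key cSle cardD fourab eq by linarith
    then have DBB0: "DBB = {}" using finS DBB_def by simp
    have e4: "4 * (card B * d) = n^2" using key cSle cardD fourab eq by linarith
    then have Bd: "card B = d" using four_ab_eq[of "card B" d] cB by (simp add: mult.assoc)
    have cSeq: "card S = card B * d" using key cSle cardD fourab eq e4 by linarith
    have SBA: "S \<subseteq> B \<times> A"
    proof
      fix p assume pS: "p \<in> S"
      then obtain u w where p: "p = (u,w)" "u \<in> B" "w \<in> N u" unfolding S_def by auto
      have "(w,u) \<in> D" using symD SD pS p by auto
      moreover have "w \<in> V" using p NV by auto
      ultimately have "w \<in> B \<Longrightarrow> False"
      proof -
        assume wB: "w \<in> B"
        have "(w,u) \<in> S" using \<open>(w,u) \<in> D\<close> wB unfolding S_def D_def by auto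
        then have "prod.swap (w,u) \<in> prod.swap ` S" by (rule imageI)
        then have "p \<in> prod.swap ` S" using p by simp
        then show False using DBB0 pS DBB_def by auto
      qed
      then show "p \<in> B \<times> A" using p \<open>w \<in> V\<close> B_def by auto
    qed
    have finA: "finite A" using AV fin finite_subset by blast
    have SeqBA: "S = B \<times> A"
      by (rule card_subset_eq) (use finB finA SBA cSeq d_def in auto)
    have Leq: "L = {{a,b} | a b. a \<in> A \<and> b \<in> V - A}"
    proof
      show "L \<subseteq> {{a,b} | a b. a \<in> A \<and> b \<in> V - A}"
      proof
        fix e assume eL: "e \<in> L"
        from edges[OF eL] obtain u w where uw: "e = {u,w}" by (meson card_2_iff)
        then have "(u,w) \<in> D" using inD eL by simp
        then have "(u,w) \<in> B \<times> A \<or> (w,u) \<in> B \<times> A" using Dcov SeqBA by auto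
        then show "e \<in> {{a,b} | a b. a \<in> A \<and> b \<in> V - A}"
          using uw B_def by (auto simp: insert_commute)
      qed
    next
      show "{{a,b} | a b. a \<in> A \<and> b \<in> V - A} \<subseteq> L"
      proof
        fix e assume "e \<in> {{a,b} | a b. a \<in> A \<and> b \<in> V - A}"
        then obtain a b where ab: "e = {a,b}" "a \<in> A" "b \<in> B" using B_def by auto
        then have "(b,a) \<in> D" using SeqBA SD by auto
        then show "e \<in> L" using inD ab by (simp add: insert_commute)
      qed
    qed
    have "2 * card A = card V" using Bd cB d_def n_def by simp
    then show "\<exists>A\<subseteq>V. 2 * card A = card V \<and> L = {{a,b} | a b. a \<in> A \<and> b \<in> V - A}"
      using AV Leq by blast
  qed
qed



lemma pair_uniq:
  assumes "pairwise disjnt P" "p \<in> P" "q \<in> P" "u \<in> p" "u \<in> q"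
  shows "p = q"
  using assms unfolding pairwise_def disjnt_def by blast

lemma tstar_mem:
  "t \<in> Tstar_choice V P \<longleftrightarrow> (\<exists>p r. p \<in> P \<and> r \<in> V - \<Union>P \<and> t = insert r p)"
  unfolding Tstar_choice_def by blast

lemma tstar_choice_props:
  assumes fin: "finite V" and cV: "card V = n" and adm: "admissible_pairs n V P" and d4: "4 dvd n"
  shows "Tstar_choice V P \<subseteq> triangles_on V \<and> card (Tstar_choice V P) = n^2 div 8
     \<and> \<not> has_rainbow_triangle V (Tstar_choice V P)"
proof -
  define U where "U = \<Union>P"
  define R where "R = V - U"
  have Pp: "p \<subseteq> V" "card p = 2" "finite p" if "p \<in> P" for p
    using adm that unfolding admissible_pairs_def by (auto intro: card_ge_0_finite)
  have finP: "finite P" and cP: "card P = n div 4" and dj: "pairwise disjnt P"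
    using adm unfolding admissible_pairs_def by auto
  have UV: "U \<subseteq> V" using Pp U_def by auto
  have cU: "card U = 2 * (n div 4)"
    unfolding U_def using card_Union_disjoint[OF dj] Pp cP by simp
  have cR: "card R = 2 * (n div 4)"
    unfolding R_def using card_Diff_subset[OF finite_subset[OF UV fin] UV] cU cV d4 by auto
  have TS: "Tstar_choice V P = (\<lambda>(p,r). insert r p) ` (P \<times> R)"
    unfolding Tstar_choice_def R_def U_def by auto
  have inj: "inj_on (\<lambda>(p,r). insert r p) (P \<times> R)"
  proof (rule inj_onI)
    fix a b assume a: "a \<in> P \<times> R" and b: "b \<in> P \<times> R"
      and eq: "(\<lambda>(p,r). insert r p) a = (\<lambda>(p,r). insert r p) b"
    obtain p r where pr: "a = (p,r)" "p \<in> P" "r \<in> R" using a by auto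
    obtain p' r' where pr': "b = (p',r')" "p' \<in> P" "r' \<in> R" using b by auto
    have e: "insert r p = insert r' p'" using eq pr pr' by simp
    have "p = insert r p \<inter> U" using pr R_def U_def by auto
    moreover have "p' = insert r' p' \<inter> U" using pr' R_def U_def by auto
    ultimately have "p = p'" using e by simp
    moreover have "r = r'" using e pr pr' R_def U_def by auto
    ultimately show "a = b" using pr pr' by simp
  qed
  have finR: "finite R" using fin R_def by auto
  have card: "card (Tstar_choice V P) = n^2 div 8"
  proof -
    obtain k where k: "n = 4*k" using d4 by auto
    have "card (Tstar_choice V P) = card P * card R"
      unfolding TS using card_image[OF inj] card_cartesian_product by simp
    also have "\<dots> = 2*k*k" using cP cR k by simp
    also have "\<dots> = n^2 div 8" using k by (simp add: power2_eq_square)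
    finally show ?thesis .
  qed
  have tri: "Tstar_choice V P \<subseteq> triangles_on V"
  proof
    fix t assume "t \<in> Tstar_choice V P"
    then obtain p r where pr: "p \<in> P" "r \<in> R" "t = insert r p"
      unfolding TS by auto
    have "r \<notin> p" using pr R_def U_def by auto
    then show "t \<in> triangles_on V" using pr Pp[OF pr(1)] R_def unfolding triangles_on_def by auto
  qed
  have memU: "\<exists>r\<in>R. t = insert r p" if a: "t \<in> Tstar_choice V P" "u \<in> t" "u \<in> U" "p \<in> P" "u \<in> p" for t u p
  proof -
    obtain q r where qr: "q \<in> P" "r \<in> R" "t = insert r q" using a(1) by (auto simp: TS)
    have "u \<in> q" using qr a R_def by auto
    then have "q = p" using pair_uniq[OF dj qr(1) a(4)] a(5) by simp
    then show ?thesis using qr by auto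
  qed
  have memR: "\<exists>q\<in>P. t = insert r q" if a: "t \<in> Tstar_choice V P" "r \<in> t" "r \<in> R" for t r
  proof -
    obtain q r' where qr: "q \<in> P" "r' \<in> R" "t = insert r' q" using a(1) by (auto simp: TS)
    have "r \<notin> q" using qr a R_def U_def by auto
    then have "r = r'" using qr a by auto
    then show ?thesis using qr by auto
  qed
  have inU: "\<exists>p\<in>P. u \<in> p" if "u \<in> U" for u using that U_def by auto
  have norb: "\<not> has_rainbow_triangle V (Tstar_choice V P)"
  proof
    assume "has_rainbow_triangle V (Tstar_choice V P)"
    then obtain x y z t1 t2 t3 where
      xyz: "{x,y,z} \<in> triangles_on V" and
      t: "t1 \<in> Tstar_choice V P" "t2 \<in> Tstar_choice V P" "t3 \<in> Tstar_choice V P"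
        "t1 \<noteq> t2" "t2 \<noteq> t3" "t1 \<noteq> t3" "{x,y} \<subseteq> t1" "{y,z} \<subseteq> t2" "{x,z} \<subseteq> t3"
      unfolding has_rainbow_triangle_def by metis
    have c3: "card {x,y,z} = 3" and xyzV: "{x,y,z} \<subseteq> V" using xyz unfolding triangles_on_def by auto
    have dxyz: "x \<noteq> y" "y \<noteq> z" "x \<noteq> z" using c3d[OF c3] by auto
    have twoR: False if tr: "a \<in> R" "b \<in> R" "a \<noteq> b" "{a,b} \<subseteq> s" "s \<in> Tstar_choice V P" for a b s
    proof -
      obtain q where q: "q \<in> P" "s = insert a q" using memR[OF tr(5) _ tr(1)] tr(4) by auto
      have "b \<in> q" using q tr(3,4) by auto
      then have "b \<in> U" using q U_def by auto
      then show False using tr(2) R_def by auto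
    qed
    have VUR: "v \<in> U \<or> v \<in> R" if "v \<in> V" for v using that R_def by auto
    have ox: "x \<in> U \<or> x \<in> R" "y \<in> U \<or> y \<in> R" "z \<in> U \<or> z \<in> R" using VUR xyzV by auto
    have nxy: "\<not> (x \<in> R \<and> y \<in> R)" using twoR[of x y t1] t(1,7) dxyz by blast
    have nyz: "\<not> (y \<in> R \<and> z \<in> R)" using twoR[of y z t2] t(2,8) dxyz by blast
    have nxz: "\<not> (x \<in> R \<and> z \<in> R)" using twoR[of x z t3] t(3,9) dxyz by blast
    consider "x \<in> U" "y \<in> U" "z \<in> U" | "x \<in> R" "y \<in> U" "z \<in> U" | "x \<in> U" "y \<in> R" "z \<in> U"
      | "x \<in> U" "y \<in> U" "z \<in> R"
      using ox nxy nyz nxz by blast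
    then show False
    proof cases
      case 1
      obtain p where p: "p \<in> P" "y \<in> p" using inU[OF 1(2)] by auto
      obtain r1 where r1: "r1 \<in> R" "t1 = insert r1 p" using memU[OF t(1) _ 1(2) p] t by auto
      obtain r2 where r2: "r2 \<in> R" "t2 = insert r2 p" using memU[OF t(2) _ 1(2) p] t by auto
      have "x \<in> p" "z \<in> p" using r1 r2 t 1 R_def by auto
      then have "card {x,y,z} \<le> card p" using p Pp by (intro card_mono) auto
      then show False using dxyz Pp[OF p(1)] by simp
    next
      case 2
      obtain p where p: "p \<in> P" "y \<in> p" using inU[OF 2(2)] by auto
      obtain r2 where r2: "r2 \<in> R" "t2 = insert r2 p" using memU[OF t(2) _ 2(2) p] t by auto
      have "z \<in> p" using r2 t 2 R_def by auto
      obtain r1 where r1: "r1 \<in> R" "t1 = insert r1 p" using memU[OF t(1) _ 2(2) p] t by auto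
      obtain r3 where r3: "r3 \<in> R" "t3 = insert r3 p" using memU[OF t(3) _ 2(3) p(1) \<open>z \<in> p\<close>] t by auto
      have "x = r1" "x = r3" using r1 r3 t 2 R_def U_def p by auto
      then show False using r1 r3 t by simp
    next
      case 3
      obtain p where p: "p \<in> P" "x \<in> p" using inU[OF 3(1)] by auto
      obtain r3 where r3: "r3 \<in> R" "t3 = insert r3 p" using memU[OF t(3) _ 3(1) p] t by auto
      have "z \<in> p" using r3 t 3 R_def by auto
      obtain r1 where r1: "r1 \<in> R" "t1 = insert r1 p" using memU[OF t(1) _ 3(1) p] t by auto
      obtain r2 where r2: "r2 \<in> R" "t2 = insert r2 p" using memU[OF t(2) _ 3(3) p(1) \<open>z \<in> p\<close>] t by auto
      have "y = r1" "y = r2" using r1 r2 t 3 R_def U_def p by auto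
      then show False using r1 r2 t by simp
    next
      case 4
      obtain p where p: "p \<in> P" "x \<in> p" using inU[OF 4(1)] by auto
      obtain r1 where r1: "r1 \<in> R" "t1 = insert r1 p" using memU[OF t(1) _ 4(1) p] t by auto
      have "y \<in> p" using r1 t 4 R_def by auto
      obtain r2 where r2: "r2 \<in> R" "t2 = insert r2 p" using memU[OF t(2) _ 4(2) p(1) \<open>y \<in> p\<close>] t by auto
      obtain r3 where r3: "r3 \<in> R" "t3 = insert r3 p" using memU[OF t(3) _ 4(1) p] t by auto
      have "z = r2" "z = r3" using r2 r3 t 4 R_def U_def p by auto
      then show False using r2 r3 t by simp
    qed
  qed
  show ?thesis using tri card norb by simp
qed




lemma c3i: "x \<noteq> y \<Longrightarrow> y \<noteq> z \<Longrightarrow> x \<noteq> z \<Longrightarrow> card {x,y,z} = 3"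
  by simp

definition priv :: "'a set set \<Rightarrow> 'a set \<Rightarrow> 'a set \<Rightarrow> bool" where
  "priv T t e \<longleftrightarrow> (\<forall>s\<in>T. e \<subseteq> s \<longrightarrow> s = t)"

lemma tri_eq:
  assumes "t \<in> triangles_on V" "{x,y,z} \<subseteq> t" "x \<noteq> y" "y \<noteq> z" "x \<noteq> z"
  shows "t = {x,y,z}"
proof -
  have "finite t" "card t = 3" using assms(1) unfolding triangles_on_def
    by (auto intro: card_ge_0_finite)
  then show ?thesis using card_subset_eq[of t "{x,y,z}"] assms by simp
qed

lemma rainbowI:
  assumes "{x,y,z} \<in> triangles_on V" "t1 \<in> T" "t2 \<in> T" "t3 \<in> T" "t1 \<noteq> t2" "t2 \<noteq> t3" "t1 \<noteq> t3"
    "{x,y} \<subseteq> t1" "{y,z} \<subseteq> t2" "{x,z} \<subseteq> t3"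
  shows "has_rainbow_triangle V T"
  unfolding has_rainbow_triangle_def
  by (rule exI[of _ x], rule exI[of _ y], rule exI[of _ z], rule exI[of _ t1], rule exI[of _ t2],
      rule exI[of _ t3]) (simp only: assms simp_thms not_False_eq_True)

lemma two_shared:
  assumes TV: "T \<subseteq> triangles_on V" and tT: "t \<in> T" and t: "t = {x,y,z}"
    and d: "x \<noteq> y" "y \<noteq> z" "x \<noteq> z"
    and s1: "s1 \<in> T" "s1 \<noteq> t" "{x,y} \<subseteq> s1"
    and s2: "s2 \<in> T" "s2 \<noteq> t" "{y,z} \<subseteq> s2"
  shows "has_rainbow_triangle V T"
proof -
  have "s1 \<noteq> s2"
  proof
    assume "s1 = s2"
    then have "{x,y,z} \<subseteq> s1" using s1 s2 by auto
    then have "s1 = t" using tri_eq[of s1 V x y z] s1 TV d t by auto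
    then show False using s1 by simp
  qed
  moreover have "{x,y,z} \<in> triangles_on V" using t tT TV by auto
  moreover have "{x,z} \<subseteq> t" using t by auto
  ultimately show ?thesis using rainbowI[of x y z V s1 T s2 t] s1 s2 tT \<open>s1 \<noteq> s2\<close> by metis
qed

lemma apex_ex:
  assumes TV: "T \<subseteq> triangles_on V" and nr: "\<not> has_rainbow_triangle V T" and tT: "t \<in> T"
  shows "\<exists>a\<in>t. \<forall>b\<in>t. b \<noteq> a \<longrightarrow> priv T t {a,b}"
proof -
  have "card t = 3" using tT TV unfolding triangles_on_def by auto
  then obtain x y z where t: "t = {x,y,z}" and d: "x \<noteq> y" "y \<noteq> z" "x \<noteq> z"
    by (metis card_3_iff)
  have np: "\<exists>s. s \<in> T \<and> s \<noteq> t \<and> e \<subseteq> s" if "\<not> priv T t e" for e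
    using that unfolding priv_def by auto
  have gen: "priv T t {a,b} \<or> priv T t {b,c}" if "t = {a,b,c}" "a \<noteq> b" "b \<noteq> c" "a \<noteq> c" for a b c
  proof (rule ccontr)
    assume "\<not> (priv T t {a,b} \<or> priv T t {b,c})"
    then have n1: "\<not> priv T t {a,b}" and n2: "\<not> priv T t {b,c}" by auto
    obtain s1 where s1: "s1 \<in> T" "s1 \<noteq> t" "{a,b} \<subseteq> s1" using np[OF n1] by blast
    obtain s2 where s2: "s2 \<in> T" "s2 \<noteq> t" "{b,c} \<subseteq> s2" using np[OF n2] by blast
    have "has_rainbow_triangle V T"
      by (rule two_shared[OF TV tT that s1 s2])
    then show False using nr by simp
  qed
  have sym: "{a,b} = {b,a}" for a b :: 'a by auto
  have cxy: "priv T t {x,y} \<or> priv T t {y,z}" using gen[OF t d] .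
  have cxz: "priv T t {y,x} \<or> priv T t {x,z}" using gen[of y x z] t d by (simp add: insert_commute)
  have cyz: "priv T t {x,z} \<or> priv T t {z,y}" using gen[of x z y] t d by (simp add: insert_commute)
  show ?thesis
  proof (cases "priv T t {x,y}")
    case True
    show ?thesis
    proof (cases "priv T t {x,z}")
      case True
      then show ?thesis using \<open>priv T t {x,y}\<close> t by (intro bexI[of _ x]) auto
    next
      case False
      then have "priv T t {y,z}" using cyz sym[of z y] by simp
      moreover have "priv T t {y,x}" using \<open>priv T t {x,y}\<close> sym[of x y] by simp
      ultimately show ?thesis using t by (intro bexI[of _ y]) auto
    qed
  next
    case False
    then have "priv T t {y,z}" "priv T t {x,z}" using cxy cxz sym[of x y] by auto
    then have "priv T t {z,y}" "priv T t {z,x}" using sym[of x z] sym[of y z] by auto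
    then show ?thesis using t by (intro bexI[of _ z]) auto
  qed
qed

definition apex :: "'a set set \<Rightarrow> 'a set \<Rightarrow> 'a" where
  "apex T t = (SOME a. a \<in> t \<and> (\<forall>b\<in>t. b \<noteq> a \<longrightarrow> priv T t {a,b}))"

lemma apex_props:
  assumes "T \<subseteq> triangles_on V" "\<not> has_rainbow_triangle V T" "t \<in> T"
  shows "apex T t \<in> t" "\<And>b. b \<in> t \<Longrightarrow> b \<noteq> apex T t \<Longrightarrow> priv T t {apex T t, b}"
proof -
  have "\<exists>a. a \<in> t \<and> (\<forall>b\<in>t. b \<noteq> a \<longrightarrow> priv T t {a,b})" using apex_ex[OF assms] by blast
  from someI_ex[OF this] show "apex T t \<in> t" "\<And>b. b \<in> t \<Longrightarrow> b \<noteq> apex T t \<Longrightarrow> priv T t {apex T t, b}"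
    unfolding apex_def by auto
qed

definition legs :: "'a set set \<Rightarrow> 'a set set" where
  "legs T = {{apex T t, b} | t b. t \<in> T \<and> b \<in> t \<and> b \<noteq> apex T t}"

context
  fixes T :: "'a set set" and V :: "'a set"
  assumes TV: "T \<subseteq> triangles_on V" and nr: "\<not> has_rainbow_triangle V T"
begin

lemma leg_in: "e \<in> legs T \<Longrightarrow> \<exists>s\<in>T. e \<subseteq> s"
  unfolding legs_def using apex_props[OF TV nr] by blast

lemma leg_of:
  assumes "e \<in> legs T" "e \<subseteq> s" "s \<in> T"
  shows "priv T s e \<and> (\<exists>b\<in>s. b \<noteq> apex T s \<and> e = {apex T s, b})"
proof -
  obtain t b where tb: "e = {apex T t, b}" "t \<in> T" "b \<in> t" "b \<noteq> apex T t"
    using assms(1) unfolding legs_def by blast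
  have pt: "priv T t e" using apex_props(2)[OF TV nr tb(2) tb(3) tb(4)] tb(1) by simp
  then have "s = t" using assms unfolding priv_def by auto
  then show ?thesis using pt tb by auto
qed

lemma legs_edge: "e \<in> legs T \<Longrightarrow> e \<subseteq> V \<and> card e = 2"
proof -
  assume "e \<in> legs T"
  then obtain t b where tb: "e = {apex T t, b}" "t \<in> T" "b \<in> t" "b \<noteq> apex T t"
    unfolding legs_def by blast
  have "t \<subseteq> V" using tb(2) TV unfolding triangles_on_def by auto
  then show ?thesis using tb apex_props(1)[OF TV nr tb(2)] by auto
qed

lemma card_legs:
  assumes finT: "finite T"
  shows "card (legs T) = 2 * card T"
proof -
  define S where "S = (SIGMA t:T. t - {apex T t})"
  have LS: "legs T = (\<lambda>(t,b). {apex T t, b}) ` S" unfolding legs_def S_def by auto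
  have inj: "inj_on (\<lambda>(t,b). {apex T t, b}) S"
  proof (rule inj_onI)
    fix p q assume p: "p \<in> S" and q: "q \<in> S" and eq: "(\<lambda>(t,b). {apex T t, b}) p = (\<lambda>(t,b). {apex T t, b}) q"
    obtain t b where tb: "p = (t,b)" "t \<in> T" "b \<in> t" "b \<noteq> apex T t" using p S_def by auto
    obtain t' b' where tb': "q = (t',b')" "t' \<in> T" "b' \<in> t'" "b' \<noteq> apex T t'" using q S_def by auto
    have e: "{apex T t, b} = {apex T t', b'}" using eq tb tb' by simp
    have pt: "priv T t {apex T t, b}" using apex_props(2)[OF TV nr tb(2) tb(3) tb(4)] .
    have "{apex T t', b'} \<subseteq> t'" using apex_props(1)[OF TV nr tb'(2)] tb' by auto
    then have "t' = t" using pt e tb' unfolding priv_def by auto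
    then have "b = b'" using e tb tb' by (auto simp: doubleton_eq_iff)
    then show "p = q" using tb tb' \<open>t' = t\<close> by simp
  qed
  have ct: "card (t - {apex T t}) = 2" if "t \<in> T" for t
  proof -
    have "card t = 3" using that TV unfolding triangles_on_def by auto
    moreover have "finite t" by (rule card_ge_0_finite) (use \<open>card t = 3\<close> in simp)
    ultimately show ?thesis using apex_props(1)[OF TV nr that] by simp
  qed
  have fin2: "finite (t - {apex T t})" if "t \<in> T" for t
    using ct[OF that] by (intro card_ge_0_finite) simp
  have "card (legs T) = card S" unfolding LS using card_image[OF inj] .
  also have "\<dots> = (\<Sum>t\<in>T. card (t - {apex T t}))" unfolding S_def
    using finT fin2 by (simp add: card_SigmaI)
  also have "\<dots> = (\<Sum>t\<in>T. 2)" using ct by simp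
  finally show ?thesis by simp
qed

lemma legs_tf:
  assumes "{x,y} \<in> legs T" "{y,z} \<in> legs T" "{x,z} \<in> legs T"
  shows False
proof -
  have d: "x \<noteq> y" "y \<noteq> z" "x \<noteq> z" using legs_edge assms by fastforce+
  obtain t1 where t1: "t1 \<in> T" "{x,y} \<subseteq> t1" using leg_in[OF assms(1)] by auto
  obtain t2 where t2: "t2 \<in> T" "{y,z} \<subseteq> t2" using leg_in[OF assms(2)] by auto
  obtain t3 where t3: "t3 \<in> T" "{x,z} \<subseteq> t3" using leg_in[OF assms(3)] by auto
  have allin: False if s: "s \<in> T" "{x,y,z} \<subseteq> s" for s
  proof -
    have "{x,y} \<subseteq> s" "{y,z} \<subseteq> s" "{x,z} \<subseteq> s" using s by auto
    then obtain b1 b2 b3 where "{x,y} = {apex T s, b1}" "{y,z} = {apex T s, b2}" "{x,z} = {apex T s, b3}"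
      using leg_of[OF assms(1) _ s(1)] leg_of[OF assms(2) _ s(1)] leg_of[OF assms(3) _ s(1)] by metis
    then have "apex T s \<in> {x,y}" "apex T s \<in> {y,z}" "apex T s \<in> {x,z}" by auto
    then show False using d by auto
  qed
  have "t1 \<noteq> t2" using allin[of t1] t1 t2 by auto
  moreover have "t2 \<noteq> t3" using allin[of t2] t2 t3 by auto
  moreover have "t1 \<noteq> t3" using allin[of t1] t1 t3 by auto
  moreover have "{x,y,z} \<in> triangles_on V"
    using legs_edge assms d unfolding triangles_on_def by auto
  ultimately have "has_rainbow_triangle V T"
    using rainbowI[of x y z V t1 T t2 t3] t1 t2 t3 by blast
  then show False using nr by simp
qed

end



lemma struct_X:
  fixes T :: "'a set set"
  assumes TV: "T \<subseteq> triangles_on V" and nr: "\<not> has_rainbow_triangle V T"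
    and XV: "X \<subseteq> V"
    and LX: "legs T = {{a,b} | a b. a \<in> X \<and> b \<in> V - X}"
    and t0: "t0 \<in> T" and ax: "apex T t0 \<in> X"
  shows "\<exists>H. (\<forall>p\<in>H. p \<subseteq> V - X \<and> card p = 2) \<and> pairwise disjnt H \<and> \<Union>H = V - X
            \<and> T = Tstar_choice V H"
proof -
  define Y where "Y = V - X"
  have crossmem: "{a,b} \<in> legs T \<longleftrightarrow> (a \<in> X \<and> b \<in> Y) \<or> (a \<in> Y \<and> b \<in> X)" for a b
    unfolding LX Y_def by (auto simp: doubleton_eq_iff)
  have tform: "\<exists>b1 b2. t = {apex T t, b1, b2} \<and> b1 \<noteq> b2 \<and> b1 \<noteq> apex T t \<and> b2 \<noteq> apex T t
      \<and> {apex T t, b1} \<in> legs T \<and> {apex T t, b2} \<in> legs T" if tT: "t \<in> T" for t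
  proof -
    have c3: "card t = 3" using tT TV unfolding triangles_on_def by auto
    have ft: "finite t" by (rule card_ge_0_finite) (use c3 in simp)
    have at: "apex T t \<in> t" using apex_props(1)[OF TV nr tT] .
    have "card (t - {apex T t}) = 2" using c3 ft at by simp
    then obtain b1 b2 where bb: "t - {apex T t} = {b1,b2}" "b1 \<noteq> b2" by (meson card_2_iff)
    have tt: "t = {apex T t, b1, b2}" using bb at by auto
    have nb: "b1 \<noteq> apex T t" "b2 \<noteq> apex T t" "b1 \<in> t" "b2 \<in> t" using bb by auto
    have "{apex T t, b1} \<in> legs T" "{apex T t, b2} \<in> legs T"
      unfolding legs_def using tT nb by blast+
    then show ?thesis using tt bb nb by blast
  qed
  have F3: "{q,b1,b2} \<in> T" if tT: "t \<in> T" and tt: "t = {p,b1,b2}" and l1: "{p,b1} \<in> legs T"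
    and l2: "{p,b2} \<in> legs T" and bne: "b1 \<noteq> b2" and qV: "q \<in> V" and side: "q \<in> X \<longleftrightarrow> p \<in> X"
    for t p b1 b2 q
  proof (cases "q = p")
    case True
    then show ?thesis using tT tt by simp
  next
    case False
    have pb1: "(p \<in> X \<and> b1 \<in> Y) \<or> (p \<in> Y \<and> b1 \<in> X)" using crossmem l1 by blast
    have pb2: "(p \<in> X \<and> b2 \<in> Y) \<or> (p \<in> Y \<and> b2 \<in> X)" using crossmem l2 by blast
    have qXY: "q \<in> X \<or> q \<in> Y" using qV Y_def by auto
    have qb: "q \<noteq> b1" "q \<noteq> b2" using pb1 pb2 side qXY Y_def by auto
    have lq1: "{q,b1} \<in> legs T" using crossmem pb1 side qXY Y_def by auto
    have lq2: "{q,b2} \<in> legs T" using crossmem pb2 side qXY Y_def by auto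
    obtain t1 where t1: "t1 \<in> T" "{q,b1} \<subseteq> t1" using leg_in[OF TV nr lq1] by auto
    obtain t2 where t2: "t2 \<in> T" "{q,b2} \<subseteq> t2" using leg_in[OF TV nr lq2] by auto
    show ?thesis
    proof (cases "t1 = t2")
      case True
      then have "{q,b1,b2} \<subseteq> t1" using t1 t2 by auto
      then have "t1 = {q,b1,b2}" using tri_eq[of t1 V q b1 b2] t1 TV qb bne by auto
      then show ?thesis using t1 by simp
    next
      case False
      have qt: "q \<notin> t" using tt qb \<open>q \<noteq> p\<close> by auto
      have "t1 \<noteq> t" using qt t1 by auto
      moreover have "t \<noteq> t2" using qt t2 by auto
      moreover have "{q,b1,b2} \<in> triangles_on V"
        using legs_edge[OF TV nr l1] legs_edge[OF TV nr l2] qV qb bne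
        unfolding triangles_on_def by auto
      moreover have "{b1,b2} \<subseteq> t" using tt by auto
      ultimately have "has_rainbow_triangle V T"
        using rainbowI[of q b1 b2 V t1 T t t2] t1 t2 tT False by blast
      then show ?thesis using nr by simp
    qed
  qed
  obtain c1 c2 where tf0: "t0 = {apex T t0, c1, c2}" "c1 \<noteq> c2" "c1 \<noteq> apex T t0" "c2 \<noteq> apex T t0"
      "{apex T t0, c1} \<in> legs T" "{apex T t0, c2} \<in> legs T"
    using tform[OF t0] by blast
  have c12Y: "c1 \<in> Y" "c2 \<in> Y" using tf0(5,6) crossmem ax Y_def by auto
  have Xapex: "apex T s \<in> X" if sT: "s \<in> T" for s
  proof (rule ccontr)
    assume nX: "apex T s \<notin> X"
    obtain d1 d2 where sf: "s = {apex T s, d1, d2}" "d1 \<noteq> d2" "d1 \<noteq> apex T s" "d2 \<noteq> apex T s"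
      "{apex T s, d1} \<in> legs T" "{apex T s, d2} \<in> legs T"
      using tform[OF sT] by blast
    have sY: "apex T s \<in> Y" using legs_edge[OF TV nr sf(5)] nX Y_def by auto
    have dX: "d1 \<in> X" "d2 \<in> X" using sf(5,6) crossmem sY nX by auto
    have m1: "{d1,c1,c2} \<in> T" using F3[OF t0 tf0(1) tf0(5) tf0(6) tf0(2), of d1] dX ax XV by auto
    have m2: "{c1,d1,d2} \<in> T" using F3[OF sT sf(1) sf(5) sf(6) sf(2), of c1] c12Y sY nX Y_def by auto
    have l: "{d1,c1} \<in> legs T" using crossmem dX c12Y by auto
    have "priv T {d1,c1,c2} {d1,c1}" using leg_of[OF TV nr l _ m1] by auto
    then have "{c1,d1,d2} = {d1,c1,c2}" using m2 unfolding priv_def by auto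
    then have "c2 \<in> {c1,d1,d2}" by auto
    then show False using tf0(2) c12Y dX Y_def by auto
  qed
  define H where "H = (\<lambda>t. t - {apex T t}) ` T"
  have Hform: "\<exists>s b1 b2. s \<in> T \<and> p = {b1,b2} \<and> s = {apex T s, b1, b2} \<and> b1 \<noteq> b2 \<and>
      {apex T s, b1} \<in> legs T \<and> {apex T s, b2} \<in> legs T \<and> b1 \<in> Y \<and> b2 \<in> Y \<and> apex T s \<in> X"
    if pH: "p \<in> H" for p
  proof -
    obtain s where s: "s \<in> T" "p = s - {apex T s}" using pH H_def by auto
    obtain b1 b2 where sf: "s = {apex T s, b1, b2}" "b1 \<noteq> b2" "b1 \<noteq> apex T s" "b2 \<noteq> apex T s"
      "{apex T s, b1} \<in> legs T" "{apex T s, b2} \<in> legs T"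
      using tform[OF s(1)] by blast
    have "p = {b1,b2}" using s sf by auto
    moreover have "b1 \<in> Y" "b2 \<in> Y" using sf(5,6) crossmem Xapex[OF s(1)] Y_def by auto
    ultimately show ?thesis using s sf Xapex[OF s(1)] by blast
  qed
  have Hp: "p \<subseteq> Y \<and> card p = 2" if "p \<in> H" for p using Hform[OF that] by auto
  have Tins: "insert r p \<in> T" if pH: "p \<in> H" and rX: "r \<in> X" for p r
  proof -
    obtain s b1 b2 where h: "s \<in> T" "p = {b1,b2}" "s = {apex T s, b1, b2}" "b1 \<noteq> b2"
      "{apex T s, b1} \<in> legs T" "{apex T s, b2} \<in> legs T" "apex T s \<in> X"
      using Hform[OF pH] by blast
    have "{r,b1,b2} \<in> T" using F3[OF h(1) h(3) h(5) h(6) h(4), of r] rX XV h(7) by auto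
    then show ?thesis using h(2) by simp
  qed
  have UH: "\<Union>H = Y"
  proof
    show "\<Union>H \<subseteq> Y" using Hp by auto
  next
    show "Y \<subseteq> \<Union>H"
    proof
      fix b assume bY: "b \<in> Y"
      let ?p = "apex T t0"
      have "{?p,b} \<in> legs T" using crossmem ax bY by auto
      then obtain s where s: "s \<in> T" "{?p,b} \<subseteq> s" using leg_in[OF TV nr] by blast
      obtain b1 b2 where sf: "s = {apex T s, b1, b2}" "b1 \<noteq> b2" "b1 \<noteq> apex T s" "b2 \<noteq> apex T s"
        "{apex T s, b1} \<in> legs T" "{apex T s, b2} \<in> legs T"
        using tform[OF s(1)] by blast
      have "b1 \<in> Y" "b2 \<in> Y" using sf(5,6) crossmem Xapex[OF s(1)] Y_def by auto
      then have "?p = apex T s" using s sf ax Y_def by auto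
      then have "b \<noteq> apex T s" using bY ax Y_def by auto
      then have "b \<in> s - {apex T s}" using s by auto
      then show "b \<in> \<Union>H" using s(1) H_def by auto
    qed
  qed
  have disj: "pairwise disjnt H"
  proof (rule pairwiseI)
    fix p p' assume pH: "p \<in> H" and pH': "p' \<in> H" and ne: "p \<noteq> p'"
    show "disjnt p p'"
    proof (rule ccontr)
      assume "\<not> disjnt p p'"
      then obtain b where b: "b \<in> p" "b \<in> p'" unfolding disjnt_def by auto
      let ?r = "apex T t0"
      have m: "insert ?r p \<in> T" "insert ?r p' \<in> T" using Tins pH pH' ax by auto
      have bY: "b \<in> Y" using b Hp pH by auto
      have l: "{?r,b} \<in> legs T" using crossmem ax bY by auto
      have "priv T (insert ?r p) {?r,b}" using leg_of[OF TV nr l _ m(1)] b by auto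
      then have "insert ?r p' = insert ?r p" using m(2) b unfolding priv_def by auto
      moreover have "?r \<notin> p" "?r \<notin> p'" using Hp pH pH' ax Y_def by auto
      ultimately have "p = p'" by (metis insert_ident)
      then show False using ne by simp
    qed
  qed
  have TH: "T = Tstar_choice V H"
  proof
    show "T \<subseteq> Tstar_choice V H"
    proof
      fix t assume tT: "t \<in> T"
      have "t = insert (apex T t) (t - {apex T t})" using apex_props(1)[OF TV nr tT] by auto
      moreover have "t - {apex T t} \<in> H" using tT H_def by auto
      moreover have "apex T t \<in> V - \<Union>H" using Xapex[OF tT] XV UH Y_def by auto
      ultimately show "t \<in> Tstar_choice V H" unfolding Tstar_choice_def by blast
    qed
  next
    show "Tstar_choice V H \<subseteq> T"
    proof
      fix t assume "t \<in> Tstar_choice V H"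
      then obtain p r where "p \<in> H" "r \<in> V - \<Union>H" "t = insert r p" unfolding Tstar_choice_def by blast
      then show "t \<in> T" using Tins UH Y_def by auto
    qed
  qed
  show ?thesis using Hp disj UH TH Y_def by auto
qed



lemma iso:
  fixes V :: "'b set"
  assumes fin: "finite V" and cV: "card V = n" and adm: "admissible_pairs n V H" and d4: "4 dvd n"
  shows "\<exists>f. bij_betw f {0..<n} V \<and> Tstar_choice V H = (\<lambda>t. f ` t) ` Tstar n"
proof -
  obtain k where k: "n = 4*k" using d4 by auto
  define U where "U = \<Union>H"
  define R where "R = V - U"
  have Hp: "p \<subseteq> V" "card p = 2" if "p \<in> H" for p
    using adm that unfolding admissible_pairs_def by auto
  have Hfin: "finite p" if "p \<in> H" for p by (rule card_ge_0_finite) (use Hp[OF that] in simp)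
  have finH: "finite H" and cH: "card H = k" and dj: "pairwise disjnt H"
    using adm k unfolding admissible_pairs_def by auto
  have UV: "U \<subseteq> V" using Hp U_def by auto
  have cU: "card U = 2 * k"
    unfolding U_def using card_Union_disjoint[OF dj] Hp cH Hfin by simp
  have cR: "card R = 2 * k"
    unfolding R_def using card_Diff_subset[OF finite_subset[OF UV fin] UV] cU cV k by auto
  have finR: "finite R" using fin R_def by auto
  obtain g where g: "bij_betw g {0..<k} H" using ex_bij_betw_nat_finite[OF finH] cH by auto
  obtain h where h: "bij_betw h {0..<2*k} R" using ex_bij_betw_nat_finite[OF finR] cR by auto
  define c1 where "c1 p = (SOME x. x \<in> p)" for p :: "'b set"
  define c2 where "c2 p = (SOME y. y \<in> p \<and> y \<noteq> c1 p)" for p :: "'b set"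
  have cc: "c1 p \<in> p \<and> c2 p \<in> p \<and> c1 p \<noteq> c2 p \<and> p = {c1 p, c2 p}" if pH: "p \<in> H" for p
  proof -
    obtain a b where ab: "p = {a,b}" "a \<noteq> b" using Hp(2)[OF pH] by (meson card_2_iff)
    have 1: "c1 p \<in> p" unfolding c1_def using ab by (metis insertI1 someI_ex)
    have "\<exists>y. y \<in> p \<and> y \<noteq> c1 p" using ab 1 by auto
    then have 2: "c2 p \<in> p \<and> c2 p \<noteq> c1 p" unfolding c2_def by (rule someI_ex)
    have "p = {c1 p, c2 p}" using 1 2 ab by auto
    then show ?thesis using 1 2 by auto
  qed
  define f where "f j = (if j < 2*k then (if even j then c1 (g (j div 2)) else c2 (g (j div 2)))
                         else h (j - 2*k))" for j
  have gH: "g i \<in> H" if "i < k" for i using g that unfolding bij_betw_def by auto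
  have hR: "h r \<in> R" if "r < 2*k" for r using h that unfolding bij_betw_def by auto
  have img: "f ` {0..<n} = V"
  proof
    show "f ` {0..<n} \<subseteq> V"
    proof
      fix v assume "v \<in> f ` {0..<n}"
      then obtain j where j: "j < n" "v = f j" by auto
      show "v \<in> V"
      proof (cases "j < 2*k")
        case True
        then have gj: "g (j div 2) \<in> H" using gH by auto
        have "c1 (g (j div 2)) \<in> V" "c2 (g (j div 2)) \<in> V" using cc[OF gj] Hp(1)[OF gj] by auto
        then show ?thesis using j True f_def by auto
      next
        case False
        then have "h (j - 2*k) \<in> R" using hR j k by auto
        then show ?thesis using j False f_def R_def by auto
      qed
    qed
  next
    show "V \<subseteq> f ` {0..<n}"
    proof
      fix v assume vV: "v \<in> V"
      show "v \<in> f ` {0..<n}"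
      proof (cases "v \<in> U")
        case True
        then obtain p where p: "p \<in> H" "v \<in> p" using U_def by auto
        obtain i where i: "i < k" "g i = p" using g p unfolding bij_betw_def by auto
        have "v = c1 p \<or> v = c2 p" using cc[OF p(1)] p by auto
        then show ?thesis
        proof
          assume "v = c1 p"
          then have "f (2*i) = v" using i f_def by auto
          moreover have "2*i < n" using i k by auto
          ultimately show ?thesis by force
        next
          assume "v = c2 p"
          then have "f (2*i+1) = v" using i f_def by auto
          moreover have "2*i+1 < n" using i k by auto
          ultimately show ?thesis by force
        qed
      next
        case False
        then have "v \<in> R" using vV R_def by auto
        then obtain r where r: "r < 2*k" "h r = v" using h unfolding bij_betw_def by auto
        then have "f (r + 2*k) = v" using f_def by auto
        moreover have "r + 2*k < n" using r k by auto
        ultimately show ?thesis by force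
      qed
    qed
  qed
  have bij: "bij_betw f {0..<n} V"
    unfolding bij_betw_def using img cV by (simp add: eq_card_imp_inj_on)
  have fimg: "f ` {2*i, 2*i+1, r} = insert (h (r - 2*k)) (g i)" if "i < k" "2*k \<le> r" "r < n" for i r
  proof -
    have fx: "f (2*i) = c1 (g i)" "f (2*i+1) = c2 (g i)" "f r = h (r - 2*k)" using that f_def by auto
    have e: "g i = {c1 (g i), c2 (g i)}" using cc[OF gH[OF that(1)]] by blast
    have "insert (h (r - 2*k)) (g i) = insert (h (r - 2*k)) {c1 (g i), c2 (g i)}" using e by (rule arg_cong)
    then show ?thesis using fx by (simp add: insert_commute)
  qed
  have TS: "Tstar_choice V H = (\<lambda>t. f ` t) ` Tstar n"
  proof
    show "Tstar_choice V H \<subseteq> (\<lambda>t. f ` t) ` Tstar n"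
    proof
      fix t assume tS: "t \<in> Tstar_choice V H"
      obtain p r where pr: "p \<in> H" "r \<in> V - \<Union>H" "t = insert r p"
        using tS unfolding Tstar_choice_def by blast
      have rR: "r \<in> R" using pr(2) R_def U_def by simp
      obtain i where i: "i < k" "g i = p" using g pr(1) unfolding bij_betw_def by auto
      obtain r' where r': "r' < 2*k" "h r' = r" using h rR unfolding bij_betw_def by auto
      have "i < n div 4 \<and> n div 2 \<le> r' + 2*k \<and> r' + 2*k < n" using i r' k by auto
      then have mem: "{2*i, 2*i+1, r' + 2*k} \<in> Tstar n" unfolding Tstar_def
        by (intro CollectI exI[of _ i] exI[of _ "r'+2*k"]) simp
      have "f ` {2*i, 2*i+1, r' + 2*k} = insert (h (r' + 2*k - 2*k)) (g i)"
        by (rule fimg) (use i r' k in auto)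
      then have "f ` {2*i, 2*i+1, r' + 2*k} = t" using pr(3) i(2) r'(2) by simp
      then show "t \<in> (\<lambda>t. f ` t) ` Tstar n" using mem by (metis image_eqI)
    qed
  next
    show "(\<lambda>t. f ` t) ` Tstar n \<subseteq> Tstar_choice V H"
    proof
      fix t assume "t \<in> (\<lambda>t. f ` t) ` Tstar n"
      then obtain s where s: "s \<in> Tstar n" "t = f ` s" by blast
      then obtain i r where ir0: "s = {2*i, 2*i+1, r}" "i < n div 4" "n div 2 \<le> r" "r < n"
        unfolding Tstar_def by blast
      have ir: "i < k" "2*k \<le> r" "r < n" using ir0 k by auto
      have "t = insert (h (r - 2*k)) (g i)" using fimg[OF ir] s(2) ir0(1) by simp
      moreover have "h (r - 2*k) \<in> V - \<Union>H" using hR[of "r - 2*k"] ir k R_def U_def by auto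
      moreover have "g i \<in> H" using gH ir by auto
      ultimately show "t \<in> Tstar_choice V H" unfolding Tstar_choice_def by blast
    qed
  qed
  show ?thesis using bij TS by blast
qed



lemma tstar_eq:
  assumes d4: "4 dvd n"
  defines "P0 \<equiv> (\<lambda>i. {2*i, 2*i+1}) ` {0..<n div 4}"
  shows "admissible_pairs n {0..<n} P0 \<and> Tstar n = Tstar_choice {0..<n} P0"
proof -
  obtain k where k: "n = 4*k" using d4 by auto
  have nk: "n div 4 = k" "n div 2 = 2*k" using k by auto
  have inj: "inj_on (\<lambda>i::nat. {2*i, 2*i+1}) {0..<k}"
  proof (rule inj_onI)
    fix i j :: nat assume "{2*i, 2*i+1} = {2*j, 2*j+1}"
    then have "2*i \<in> {2*j, 2*j+1}" by blast
    then show "i = j" by auto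
  qed
  have cP: "card P0 = n div 4" unfolding P0_def nk using card_image[OF inj] by simp
  have pp: "\<forall>p\<in>P0. p \<subseteq> {0..<n} \<and> card p = 2" unfolding P0_def nk using k by auto
  have dj: "pairwise disjnt P0"
  proof (rule pairwiseI)
    fix p q assume "p \<in> P0" "q \<in> P0" "p \<noteq> q"
    then obtain i j where ij: "p = {2*i, 2*i+1}" "q = {2*j, 2*j+1}" "i \<noteq> j" unfolding P0_def by auto
    have "2*i \<noteq> 2*j" "2*i \<noteq> 2*j+1" "2*i+1 \<noteq> 2*j" "2*i+1 \<noteq> 2*j+1" using ij(3) by presburger+
    then show "disjnt p q" using ij unfolding disjnt_def by auto
  qed
  have adm: "admissible_pairs n {0..<n} P0"
    unfolding admissible_pairs_def using cP pp dj P0_def by auto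
  have UP: "\<Union>P0 = {0..<2*k}"
  proof
    show "\<Union>P0 \<subseteq> {0..<2*k}" unfolding P0_def nk by auto
  next
    show "{0..<2*k} \<subseteq> \<Union>P0"
    proof
      fix x assume "x \<in> {0..<2*k}"
      then have "x div 2 < k" "x = 2*(x div 2) \<or> x = 2*(x div 2)+1" by auto
      then show "x \<in> \<Union>P0" unfolding P0_def nk by auto
    qed
  qed
  have R: "{0..<n} - \<Union>P0 = {2*k..<n}" using UP k by auto
  have TT: "Tstar n = Tstar_choice {0..<n} P0"
  proof
    show "Tstar n \<subseteq> Tstar_choice {0..<n} P0"
    proof
      fix t assume "t \<in> Tstar n"
      then obtain i r where ir: "t = {2*i, 2*i+1, r}" "i < n div 4" "n div 2 \<le> r" "r < n"
        unfolding Tstar_def by blast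
      have "{2*i, 2*i+1} \<in> P0" using ir(2) unfolding P0_def by auto
      moreover have "r \<in> {0..<n} - \<Union>P0" using R ir nk by auto
      moreover have "t = insert r {2*i, 2*i+1}" using ir(1) by auto
      ultimately show "t \<in> Tstar_choice {0..<n} P0" unfolding Tstar_choice_def by blast
    qed
  next
    show "Tstar_choice {0..<n} P0 \<subseteq> Tstar n"
    proof
      fix t assume "t \<in> Tstar_choice {0..<n} P0"
      then obtain p r where pr: "p \<in> P0" "r \<in> {0..<n} - \<Union>P0" "t = insert r p"
        unfolding Tstar_choice_def by blast
      obtain i where i: "i < n div 4" "p = {2*i, 2*i+1}" using pr(1) unfolding P0_def by auto
      have "t = {2*i, 2*i+1, r}" using pr(3) i(2) by auto
      moreover have "n div 2 \<le> r" "r < n" using pr(2) R nk by auto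
      ultimately show "t \<in> Tstar n" unfolding Tstar_def using i(1) by blast
    qed
  qed
  show ?thesis using adm TT by simp
qed

lemma uniq:
  fixes V :: "'b set" and T :: "'b set set"
  assumes fin: "finite V" and cV: "card V = n" and n0: "n > 0" and d4: "4 dvd n"
    and TV: "T \<subseteq> triangles_on V" and cT: "card T = n^2 div 8" and nr: "\<not> has_rainbow_triangle V T"
  shows "\<exists>f. bij_betw f {0..<n} V \<and> T = (\<lambda>t. f ` t) ` Tstar n"
proof -
  obtain k where k: "n = 4*k" using d4 by auto
  have k0: "k > 0" using n0 k by auto
  have cT2: "card T = 2*k*k" using cT k by (simp add: power2_eq_square)
  have finT: "finite T"
    by (rule finite_subset[of T "Pow V"]) (use TV fin in \<open>auto simp: triangles_on_def\<close>)
  have cL: "card (legs T) = 2 * card T" using card_legs[OF TV nr finT] .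
  have M: "4 * card (legs T) \<le> (card V)^2 \<and>
    (4 * card (legs T) = (card V)^2 \<longrightarrow> (\<exists>A\<subseteq>V. 2 * card A = card V \<and>
       legs T = {{a,b} | a b. a \<in> A \<and> b \<in> V - A}))"
    by (rule mantel[OF fin]) (use legs_edge[OF TV nr] legs_tf[OF TV nr] in auto)
  have "4 * card (legs T) = (card V)^2" using cL cT2 cV k by (simp add: power2_eq_square)
  then obtain A where A: "A \<subseteq> V" "2 * card A = n" "legs T = {{a,b} | a b. a \<in> A \<and> b \<in> V - A}"
    using M cV by auto
  have "T \<noteq> {}" using cT2 k0 by auto
  then obtain t0 where t0: "t0 \<in> T" by auto
  obtain X where X: "X \<subseteq> V" "2 * card X = n" "legs T = {{a,b} | a b. a \<in> X \<and> b \<in> V - X}"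
    "apex T t0 \<in> X"
  proof (cases "apex T t0 \<in> A")
    case True
    then show ?thesis using that A by blast
  next
    case False
    have "apex T t0 \<in> V" using apex_props(1)[OF TV nr t0] t0 TV unfolding triangles_on_def by auto
    then have ax: "apex T t0 \<in> V - A" using False by simp
    have cVA: "2 * card (V - A) = n" using A card_Diff_subset[OF finite_subset[OF A(1) fin] A(1)] cV by auto
    have "legs T = {{a,b} | a b. a \<in> V - A \<and> b \<in> V - (V - A)}"
      unfolding A(3) using A(1) by (auto simp: insert_commute)
    then show ?thesis using that[of "V - A"] ax cVA by auto
  qed
  obtain H where H: "\<forall>p\<in>H. p \<subseteq> V - X \<and> card p = 2" "pairwise disjnt H" "\<Union>H = V - X"
    "T = Tstar_choice V H"
    using struct_X[OF TV nr X(1) X(3) t0 X(4)] by blast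
  have finH: "finite H"
    by (rule finite_subset[of H "Pow V"]) (use H(1) fin in auto)
  have finp: "finite p" if "p \<in> H" for p by (rule card_ge_0_finite) (use H(1) that in simp)
  have "card (\<Union>H) = sum card H" using card_Union_disjoint[OF H(2)] finp by simp
  also have "\<dots> = 2 * card H" using H(1) by simp
  finally have "2 * card H = card (V - X)" using H(3) by simp
  also have "\<dots> = n - card X" using card_Diff_subset[OF finite_subset[OF X(1) fin] X(1)] cV by simp
  finally have cH: "card H = n div 4" using X(2) k by simp
  have adm: "admissible_pairs n V H" unfolding admissible_pairs_def using H(1,2) finH cH by auto
  show ?thesis using iso[OF fin cV adm d4] H(4) by simp
qed


theorem theorem2p2:
  fixes n :: nat
  assumes "n > 0" and "4 dvd n"
  shows "(\<forall>(V :: 'a set) P. finite V \<and> card V = n \<and> admissible_pairs n V P \<longrightarrow>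
            Tstar_choice V P \<subseteq> triangles_on V \<and>
            card (Tstar_choice V P) = n^2 div 8 \<and>
            \<not> has_rainbow_triangle V (Tstar_choice V P))
       \<and> Tstar n \<subseteq> triangles_on {0..<n} \<and> card (Tstar n) = n^2 div 8
       \<and> \<not> has_rainbow_triangle {0..<n} (Tstar n)
       \<and> (\<forall>(V :: 'b set) T. finite V \<and> card V = n \<and> T \<subseteq> triangles_on V \<and>
            card T = n^2 div 8 \<and> \<not> has_rainbow_triangle V T \<longrightarrow>
            (\<exists>f. bij_betw f {0..<n} V \<and> T = (\<lambda>t. f ` t) ` Tstar n))"
proof -
  have p1: "\<forall>(V :: 'a set) P. finite V \<and> card V = n \<and> admissible_pairs n V P \<longrightarrow>
            Tstar_choice V P \<subseteq> triangles_on V \<and>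
            card (Tstar_choice V P) = n^2 div 8 \<and>
            \<not> has_rainbow_triangle V (Tstar_choice V P)"
    using tstar_choice_props assms(2) by blast
  define P0 where "P0 = (\<lambda>i. {2*i, 2*i+1}) ` {0..<n div 4}"
  have e: "admissible_pairs n {0..<n} P0 \<and> Tstar n = Tstar_choice {0..<n} P0"
    using tstar_eq[OF assms(2)] unfolding P0_def by blast
  have p2: "Tstar n \<subseteq> triangles_on {0..<n} \<and> card (Tstar n) = n^2 div 8
       \<and> \<not> has_rainbow_triangle {0..<n} (Tstar n)"
    using tstar_choice_props[of "{0..<n}" n P0] e assms(2) by simp
  have p3: "\<forall>(V :: 'b set) T. finite V \<and> card V = n \<and> T \<subseteq> triangles_on V \<and>
            card T = n^2 div 8 \<and> \<not> has_rainbow_triangle V T \<longrightarrow>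
            (\<exists>f. bij_betw f {0..<n} V \<and> T = (\<lambda>t. f ` t) ` Tstar n)"
    using uniq assms by blast
  show ?thesis using p1 p2 p3 by blast
qed

end
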